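(* Let $H=\{\lambda\in B_{1/\sqrt2}(0):\ \mathrm{Re}(\lambda)>0,\ \mathrm{Im}(\lambda)>0\}\setminus B_{2/3}(1/3)$. Then $$\mathcal M\cap \mathrm{int}(H)\subset \mathrm{clos}(\mathrm{int}(\mathcal M)),$$ i.e. every point of $\mathcal M$ lying in the interior of $H$ is a limit of interior points of $\mathcal M$.
   Context: $\mathbb D=\{z\in\mathbb C:|z|<1\}$; $B_r(z_0)$ denotes the open disc of radius $r$ centered at $z_0$. For $\lambda\in\mathbb D$, $A_\lambda=\{\sum_{n\ge0}a_n\lambda^n: a_n\in\{-1,1\}\}$ is the attractor of the iterated function system $\{\lambda z-1,\lambda z+1\}$ on $\mathbb C$. $\mathcal M=\{\lambda\in\mathbb D: A_\lambda \text{ is connected}\}$; equivalently $\mathcal M=\{\lambda\in\mathbb D:\ \exists (a_k)_{k\ge1},\ a_k\in\{-1,0,1\},\ 1+\sum_{k\ge1}a_k\lambda^k=0\}$. $\mathrm{int}$ and $\mathrm{clos}$ denote interior and closure in $\mathbb C$. *)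

theory Defs
  imports "HOL-Analysis.Analysis"
begin

definition attractor :: "complex \<Rightarrow> complex set" where
  "attractor l = {(\<Sum>n. complex_of_int (a n) * l ^ n) | a. \<forall>n. a n \<in> {-1, 1}}"

definition connLocus :: "complex set" where
  "connLocus = {l. norm l < 1 \<and> connected (attractor l)}"

definition regionH :: "complex set" where
  "regionH = {l. l \<in> ball 0 (1 / sqrt 2) \<and> Re l > 0 \<and> Im l > 0} - ball (1/3) (2/3)"

end

theory Submission
  imports Defs "HOL-Complex_Analysis.Complex_Analysis"
begin


lemma expand_lemma:
  fixes \<mu> :: complex and S :: "complex set" and Ds :: "int set" and B :: real
  assumes mu: "norm \<mu> < 1" and bnd: "\<forall>z\<in>S. norm z \<le> B"
    and step: "\<forall>z\<in>S. \<exists>d\<in>Ds. \<exists>z'\<in>S. z = of_int d + \<mu> * z'" and zS: "z \<in> S"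
  shows "\<exists>e. (\<forall>n. e n \<in> Ds) \<and> (\<lambda>n. of_int (e n) * \<mu>^n) sums z"
proof -
  obtain g h where gh: "\<And>z. z \<in> S \<Longrightarrow> g z \<in> Ds \<and> h z \<in> S \<and> z = of_int (g z) + \<mu> * h z"
    using step by metis
  define zs where "zs n = (h ^^ n) z" for n
  define e where "e n = g (zs n)" for n
  have inv: "zs n \<in> S \<and> z = (\<Sum>k<n. of_int (e k) * \<mu>^k) + \<mu>^n * zs n" for n
  proof (induction n)
    case 0
    then show ?case using zS by (simp add: zs_def)
  next
    case (Suc n)
    have zsS: "zs (Suc n) = h (zs n)" by (simp add: zs_def)
    from Suc.IH have hz: "zs n \<in> S" and eq: "z = (\<Sum>k<n. of_int (e k) * \<mu>^k) + \<mu>^n * zs n" by auto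
    have d: "zs n = of_int (e n) + \<mu> * zs (Suc n)" using gh[OF hz] by (simp add: zsS e_def)
    have zS': "zs (Suc n) \<in> S" using gh[OF hz] zsS by simp
    have "z = (\<Sum>k<n. of_int (e k) * \<mu>^k) + \<mu>^n * (of_int (e n) + \<mu> * zs (Suc n))"
      using eq by (simp only: d[symmetric])
    also have "\<dots> = (\<Sum>k<Suc n. of_int (e k) * \<mu>^k) + \<mu>^Suc n * zs (Suc n)"
      by (simp add: distrib_left mult.commute mult.left_commute)
    finally show ?case using zS' by simp
  qed
  have eD: "e n \<in> Ds" for n using gh[of "zs n"] inv[of n] unfolding e_def by blast
  have "(\<lambda>n. \<mu>^n * zs n) \<longlonglongrightarrow> 0"
  proof (rule Lim_null_comparison)
    show "\<forall>\<^sub>F n in sequentially. norm (\<mu>^n * zs n) \<le> norm \<mu> ^ n * B"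
    proof (intro always_eventually allI)
      fix n
      have "norm (zs n) \<le> B" using inv[of n] bnd by blast
      then show "norm (\<mu>^n * zs n) \<le> norm \<mu> ^ n * B"
        by (simp add: norm_mult norm_power mult_left_mono)
    qed
    show "(\<lambda>n. norm \<mu> ^ n * B) \<longlonglongrightarrow> 0"
      using mu by (intro tendsto_mult_left_zero LIMSEQ_power_zero) auto
  qed
  then have "(\<lambda>n. z - \<mu>^n * zs n) \<longlonglongrightarrow> z - 0" by (intro tendsto_diff) auto
  moreover have "(\<lambda>n. z - \<mu>^n * zs n) = (\<lambda>n. \<Sum>k<n. of_int (e k) * \<mu>^k)"
  proof
    fix n show "z - \<mu>^n * zs n = (\<Sum>k<n. of_int (e k) * \<mu>^k)" using inv[of n] by (simp add: algebra_simps)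
  qed
  ultimately have "(\<lambda>n. of_int (e n) * \<mu>^n) sums z" by (simp add: sums_def)
  then show ?thesis using eD by blast
qed

lemma lin_step:
  fixes \<mu> :: complex and s t u v d :: real
  assumes "s = d - v * (Re \<mu>^2 + Im \<mu>^2)" "t = u + 2 * Re \<mu> * v"
  shows "complex_of_real s + complex_of_real t * \<mu> = complex_of_real d + \<mu> * (complex_of_real u + complex_of_real v * \<mu>)"
  using assms by (simp add: complex_eq_iff power2_eq_square algebra_simps)

lemma round3:
  fixes s :: real assumes "\<bar>s\<bar> \<le> 3/2"
  shows "\<exists>d::int. d \<in> ({-1,0,1}::int set) \<and> \<bar>s - d\<bar> \<le> 1/2"
proof -
  have h: "s \<le> 3/2" "-3/2 \<le> s" using assms by (auto simp: abs_le_iff)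
  consider "s > 1/2" | "s < -1/2" | "-1/2 \<le> s \<and> s \<le> 1/2" by linarith
  then show ?thesis
  proof cases
    case 1
    have "\<bar>s - real_of_int 1\<bar> \<le> 1/2" unfolding abs_le_iff of_int_1 using 1 h by linarith
    then show ?thesis by (intro exI[of _ 1] conjI) simp_all
  next
    case 2
    have "\<bar>s - real_of_int (-1)\<bar> \<le> 1/2" unfolding abs_le_iff of_int_minus of_int_1 using 2 h by linarith
    then show ?thesis by (intro exI[of _ "-1"] conjI) simp_all
  next
    case 3
    have "\<bar>s - real_of_int 0\<bar> \<le> 1/2" unfolding abs_le_iff of_int_0 using 3 h by linarith
    then show ?thesis by (intro exI[of _ 0] conjI) simp_all
  qed
qed

lemma trap_step:
  fixes \<mu> :: complex and s t :: real
  defines "\<rho> \<equiv> Re \<mu>^2 + Im \<mu>^2"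
  assumes x0: "Re \<mu> \<ge> 0" and rp: "\<rho> > 0" and cond: "1 + 2 * Re \<mu> \<le> 3 * \<rho>"
    and s: "\<bar>s\<bar> \<le> (1 + 2 * Re \<mu>) / (2 * \<rho>)" and t: "\<bar>t\<bar> \<le> 1 / (2 * \<rho>)"
  shows "\<exists>d::int. d \<in> ({-1,0,1}::int set) \<and> (\<exists>u v. \<bar>u\<bar> \<le> (1 + 2 * Re \<mu>) / (2 * \<rho>) \<and> \<bar>v\<bar> \<le> 1 / (2 * \<rho>) \<and>
     complex_of_real s + complex_of_real t * \<mu> = of_int d + \<mu> * (complex_of_real u + complex_of_real v * \<mu>))"
proof -
  define x where "x = Re \<mu>"
  have a32: "(1 + 2 * x) / (2 * \<rho>) \<le> 3/2" using cond rp by (simp add: x_def field_simps)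
  have sb: "\<bar>s\<bar> \<le> 3/2" using s a32 unfolding x_def by linarith
  obtain d :: int where d: "d \<in> ({-1,0,1}::int set)" "\<bar>s - d\<bar> \<le> 1/2"
    using round3[OF sb] by blast
  define v where "v = (d - s) / \<rho>"
  define u where "u = t - 2 * x * v"
  have "\<bar>v\<bar> = \<bar>d - s\<bar> / \<rho>" using rp by (simp add: v_def abs_divide)
  also have "\<dots> \<le> (1/2) / \<rho>"
    by (rule divide_right_mono) (use d(2) rp in \<open>simp_all add: abs_minus_commute\<close>)
  finally have vb: "\<bar>v\<bar> \<le> 1 / (2 * \<rho>)" by simp
  have "\<bar>u\<bar> \<le> \<bar>t\<bar> + \<bar>2 * x * v\<bar>" unfolding u_def by (rule abs_triangle_ineq4)
  also have "\<bar>2 * x * v\<bar> = 2 * x * \<bar>v\<bar>" using x0 by (simp add: abs_mult x_def)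
  also have "\<bar>t\<bar> + 2 * x * \<bar>v\<bar> \<le> 1 / (2 * \<rho>) + 2 * x * (1 / (2 * \<rho>))"
    using t vb x0 by (intro add_mono mult_left_mono) (auto simp: x_def)
  also have "\<dots> = (1 + 2 * x) / (2 * \<rho>)" using rp by (simp add: field_simps)
  finally have ub: "\<bar>u\<bar> \<le> (1 + 2 * Re \<mu>) / (2 * \<rho>)" by (simp add: x_def)
  have vr: "v * \<rho> = d - s" using rp by (simp add: v_def)
  have p1: "s = d - v * (Re \<mu>^2 + Im \<mu>^2)" using vr unfolding \<rho>_def by linarith
  have p2: "t = u + 2 * Re \<mu> * v" by (simp add: u_def x_def)
  have eq: "complex_of_real s + complex_of_real t * \<mu> = of_int d + \<mu> * (complex_of_real u + complex_of_real v * \<mu>)"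
    using lin_step[OF p1 p2] by simp
  have "\<exists>u v. \<bar>u\<bar> \<le> (1 + 2 * Re \<mu>) / (2 * \<rho>) \<and> \<bar>v\<bar> \<le> 1 / (2 * \<rho>) \<and>
     complex_of_real s + complex_of_real t * \<mu> = of_int d + \<mu> * (complex_of_real u + complex_of_real v * \<mu>)"
    using ub vb eq by blast
  with d(1) show ?thesis by blast
qed

lemma trap_ball:
  fixes \<mu> w :: complex
  assumes mu: "norm \<mu> < 1" and x0: "Re \<mu> \<ge> 0" and y: "Im \<mu> \<ge> 1/2"
    and cond: "1 + 2 * Re \<mu> \<le> 3 * (Re \<mu>^2 + Im \<mu>^2)" and r2: "Re \<mu>^2 + Im \<mu>^2 \<le> 1/2"
    and w: "norm w < 1/4"
  shows "\<exists>e. (\<forall>n. e n \<in> ({-1,0,1}::int set)) \<and> (\<lambda>n. of_int (e n) * \<mu>^n) sums w"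
proof -
  define \<rho> where "\<rho> = Re \<mu>^2 + Im \<mu>^2"
  have "Im \<mu>^2 > 0" using y by simp
  then have rp: "\<rho> > 0" unfolding \<rho>_def by (simp add: add_nonneg_pos)
  define a where "a = (1 + 2 * Re \<mu>) / (2 * \<rho>)"
  define b where "b = 1 / (2 * \<rho>)"
  define K where "K = {complex_of_real s + complex_of_real t * \<mu> | s t. \<bar>s\<bar> \<le> a \<and> \<bar>t\<bar> \<le> b}"
  have b1: "b \<ge> 1" using r2 rp by (simp add: b_def \<rho>_def field_simps)
  have ab: "a \<ge> b" using x0 rp by (simp add: a_def b_def divide_right_mono)
  have bnd: "\<forall>z\<in>K. norm z \<le> a + b"
  proof
    fix z assume "z \<in> K"
    then obtain s t where z: "z = complex_of_real s + complex_of_real t * \<mu>" and st: "\<bar>s\<bar> \<le> a" "\<bar>t\<bar> \<le> b"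
      unfolding K_def by blast
    have "norm z \<le> norm (complex_of_real s) + norm (complex_of_real t * \<mu>)" unfolding z by (rule norm_triangle_ineq)
    also have "\<dots> = \<bar>s\<bar> + \<bar>t\<bar> * norm \<mu>" by (simp add: norm_mult)
    also have "\<dots> \<le> a + b * 1" using st mu by (intro add_mono mult_mono) auto
    finally show "norm z \<le> a + b" by simp
  qed
  have step: "\<forall>z\<in>K. \<exists>d\<in>({-1,0,1}::int set). \<exists>z'\<in>K. z = of_int d + \<mu> * z'"
  proof
    fix z assume "z \<in> K"
    then obtain s t where z: "z = complex_of_real s + complex_of_real t * \<mu>" and st: "\<bar>s\<bar> \<le> a" "\<bar>t\<bar> \<le> b"
      unfolding K_def by blast
    from trap_step[OF x0 rp[unfolded \<rho>_def] cond, of s t] st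
    obtain d u v where "d \<in> ({-1,0,1}::int set)" "\<bar>u\<bar> \<le> a" "\<bar>v\<bar> \<le> b"
      "complex_of_real s + complex_of_real t * \<mu> = of_int d + \<mu> * (complex_of_real u + complex_of_real v * \<mu>)"
      unfolding a_def b_def \<rho>_def by blast
    then show "\<exists>d\<in>({-1,0,1}::int set). \<exists>z'\<in>K. z = of_int d + \<mu> * z'"
      unfolding z K_def by blast
  qed
  have wK: "w \<in> K"
  proof -
    define t where "t = Im w / Im \<mu>"
    define s where "s = Re w - t * Re \<mu>"
    have imw: "\<bar>Im w\<bar> \<le> 1/4" using abs_Im_le_cmod[of w] w by linarith
    have rew: "\<bar>Re w\<bar> \<le> 1/4" using abs_Re_le_cmod[of w] w by linarith
    have rem: "Re \<mu> \<le> 1" using abs_Re_le_cmod[of \<mu>] mu by linarith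
    have "\<bar>t\<bar> = \<bar>Im w\<bar> / Im \<mu>" using y by (simp add: t_def abs_divide)
    also have "\<dots> \<le> (1/4) / (1/2)" using imw y by (intro frac_le) auto
    finally have t2: "\<bar>t\<bar> \<le> 1/2" by simp
    have "\<bar>s\<bar> \<le> \<bar>Re w\<bar> + \<bar>t * Re \<mu>\<bar>" unfolding s_def by (rule abs_triangle_ineq4)
    also have "\<bar>t * Re \<mu>\<bar> = \<bar>t\<bar> * Re \<mu>" using x0 by (simp add: abs_mult)
    also have "\<bar>Re w\<bar> + \<bar>t\<bar> * Re \<mu> \<le> 1/4 + 1/2 * 1" using rew t2 rem x0 by (intro add_mono mult_mono) auto
    finally have s1: "\<bar>s\<bar> \<le> a" using ab b1 by linarith
    have "w = complex_of_real s + complex_of_real t * \<mu>"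
      using y by (simp add: complex_eq_iff s_def t_def)
    then show ?thesis unfolding K_def using s1 t2 b1 by force
  qed
  show ?thesis by (rule expand_lemma[OF mu bnd step wK])
qed

lemma digit_summable:
  fixes \<mu> :: complex and a :: "nat \<Rightarrow> int"
  assumes mu: "norm \<mu> < 1" and a: "\<And>n. \<bar>a n\<bar> \<le> 1"
  shows "summable (\<lambda>n. complex_of_int (a n) * \<mu>^n)"
    and "norm (\<Sum>n. complex_of_int (a n) * \<mu>^n) \<le> 1 / (1 - norm \<mu>)"
proof -
  have le: "norm (complex_of_int (a n) * \<mu>^n) \<le> norm \<mu> ^ n" for n
  proof -
    have "norm (complex_of_int (a n)) \<le> 1" using a[of n] by (simp only: norm_of_int)
    then show ?thesis by (simp add: norm_mult norm_power mult_left_le_one_le)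
  qed
  have sg: "summable (\<lambda>n. norm \<mu> ^ n)" using mu by (simp add: summable_geometric)
  show "summable (\<lambda>n. complex_of_int (a n) * \<mu>^n)"
    by (rule summable_comparison_test[OF _ sg]) (use le in auto)
  have "norm (\<Sum>n. complex_of_int (a n) * \<mu>^n) \<le> (\<Sum>n. norm \<mu> ^ n)"
    by (rule norm_suminf_le[OF le sg])
  also have "\<dots> = 1 / (1 - norm \<mu>)" using mu by (simp add: suminf_geometric)
  finally show "norm (\<Sum>n. complex_of_int (a n) * \<mu>^n) \<le> 1 / (1 - norm \<mu>)" .
qed

lemma attr_mem:
  assumes mu: "norm \<mu> < 1"
  shows "\<alpha> \<in> attractor \<mu> \<longleftrightarrow> (\<exists>a. (\<forall>n. a n \<in> ({-1,1}::int set)) \<and> (\<lambda>n. complex_of_int (a n) * \<mu>^n) sums \<alpha>)"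
proof
  assume "\<alpha> \<in> attractor \<mu>"
  then obtain a where a: "\<forall>n. a n \<in> ({-1,1}::int set)" and al: "\<alpha> = (\<Sum>n. complex_of_int (a n) * \<mu>^n)"
    unfolding attractor_def by blast
  have "\<bar>a n\<bar> \<le> 1" for n using a[rule_format, of n] by auto
  then have "summable (\<lambda>n. complex_of_int (a n) * \<mu>^n)" using digit_summable(1)[OF mu] by blast
  then show "\<exists>a. (\<forall>n. a n \<in> ({-1,1}::int set)) \<and> (\<lambda>n. complex_of_int (a n) * \<mu>^n) sums \<alpha>"
    using a al summable_sums by blast
next
  assume "\<exists>a. (\<forall>n. a n \<in> ({-1,1}::int set)) \<and> (\<lambda>n. complex_of_int (a n) * \<mu>^n) sums \<alpha>"
  then obtain a where a: "\<forall>n. a n \<in> ({-1,1}::int set)" and s: "(\<lambda>n. complex_of_int (a n) * \<mu>^n) sums \<alpha>"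
    by blast
  have "\<alpha> = (\<Sum>n. complex_of_int (a n) * \<mu>^n)" using s sums_unique by blast
  then show "\<alpha> \<in> attractor \<mu>" unfolding attractor_def using a by blast
qed

lemma attr_shift:
  assumes mu: "norm \<mu> < 1" and al: "\<alpha> \<in> attractor \<mu>" and s: "s \<in> ({-1,1}::int set)"
  shows "of_int s + \<mu> * \<alpha> \<in> attractor \<mu>"
proof -
  obtain a where a: "\<forall>n. a n \<in> ({-1,1}::int set)" and sa: "(\<lambda>n. complex_of_int (a n) * \<mu>^n) sums \<alpha>"
    using al attr_mem[OF mu] by blast
  define b where "b n = (if n = 0 then s else a (n - 1))" for n
  have "(\<lambda>n. \<mu> * (complex_of_int (a n) * \<mu>^n)) sums (\<mu> * \<alpha>)" by (rule sums_mult[OF sa])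
  then have "(\<lambda>n. complex_of_int (b (Suc n)) * \<mu>^(Suc n)) sums (\<mu> * \<alpha>)"
    by (simp add: b_def mult_ac)
  then have "(\<lambda>n. complex_of_int (b n) * \<mu>^n) sums (\<mu> * \<alpha> + complex_of_int (b 0) * \<mu>^0)"
    by (rule sums_Suc_iff[THEN iffD1])
  then have "(\<lambda>n. complex_of_int (b n) * \<mu>^n) sums (of_int s + \<mu> * \<alpha>)" by (simp add: b_def add.commute)
  moreover have "\<forall>n. b n \<in> ({-1,1}::int set)" using a s by (simp add: b_def)
  ultimately show ?thesis using attr_mem[OF mu] by blast
qed

lemma attr_split:
  assumes mu: "norm \<mu> < 1" and al: "\<alpha> \<in> attractor \<mu>"
  shows "\<exists>s\<in>({-1,1}::int set). \<exists>\<alpha>'\<in>attractor \<mu>. \<alpha> = of_int s + \<mu> * \<alpha>'"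
proof -
  obtain a where a: "\<forall>n. a n \<in> ({-1,1}::int set)" and sa: "(\<lambda>n. complex_of_int (a n) * \<mu>^n) sums \<alpha>"
    using al attr_mem[OF mu] by blast
  have "\<bar>a (Suc n)\<bar> \<le> 1" for n using a[rule_format, of "Suc n"] by auto
  then have "summable (\<lambda>n. complex_of_int (a (Suc n)) * \<mu>^n)" using digit_summable(1)[OF mu, of "\<lambda>n. a (Suc n)"] by blast
  then have s': "(\<lambda>n. complex_of_int (a (Suc n)) * \<mu>^n) sums (\<Sum>n. complex_of_int (a (Suc n)) * \<mu>^n)" by (rule summable_sums)
  define \<alpha>' where "\<alpha>' = (\<Sum>n. complex_of_int (a (Suc n)) * \<mu>^n)"
  note s' = s'[folded \<alpha>'_def]
  have al': "\<alpha>' \<in> attractor \<mu>" unfolding attr_mem[OF mu]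
    by (rule exI[of _ "\<lambda>n. a (Suc n)"]) (use a s' in simp)
  have "(\<lambda>n. \<mu> * (complex_of_int (a (Suc n)) * \<mu>^n)) sums (\<mu> * \<alpha>')" by (rule sums_mult[OF s'])
  then have "(\<lambda>n. complex_of_int (a (Suc n)) * \<mu>^(Suc n)) sums (\<mu> * \<alpha>')" by (simp add: mult_ac)
  then have "(\<lambda>n. complex_of_int (a n) * \<mu>^n) sums (\<mu> * \<alpha>' + complex_of_int (a 0) * \<mu>^0)"
    by (rule sums_Suc_iff[THEN iffD1])
  then have "\<alpha> = \<mu> * \<alpha>' + complex_of_int (a 0) * \<mu>^0" using sa by (rule sums_unique2[symmetric])
  then have eq: "\<alpha> = of_int (a 0) + \<mu> * \<alpha>'" by (simp add: add.commute)
  have a0: "a 0 \<in> ({-1,1}::int set)" using a by blast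
  show ?thesis using a0 al' eq by blast
qed

lemma attr_bound:
  assumes mu: "norm \<mu> < 1" and al: "\<alpha> \<in> attractor \<mu>"
  shows "norm \<alpha> \<le> 1 / (1 - norm \<mu>)"
proof -
  obtain a where a: "\<forall>n. a n \<in> ({-1,1}::int set)" and al: "\<alpha> = (\<Sum>n. complex_of_int (a n) * \<mu>^n)"
    using al unfolding attractor_def by blast
  have "\<bar>a n\<bar> \<le> 1" for n using a[rule_format, of n] by auto
  then show ?thesis using digit_summable(2)[OF mu] al by blast
qed

lemma attr_nonempty:
  assumes mu: "norm \<mu> < 1" shows "attractor \<mu> \<noteq> {}"
  unfolding attractor_def by (rule ccontr) (auto dest: spec[of _ "\<lambda>n. 1"] simp: setcompr_eq_image)

primrec Kseq :: "complex \<Rightarrow> nat \<Rightarrow> complex set" where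
  "Kseq \<mu> 0 = cball 0 (1 / (1 - norm \<mu>))"
| "Kseq \<mu> (Suc n) = (\<lambda>z. \<mu> * z - 1) ` Kseq \<mu> n \<union> (\<lambda>z. \<mu> * z + 1) ` Kseq \<mu> n"

lemma Kseq_compact: "compact (Kseq \<mu> n)"
proof (induction n)
  case 0 then show ?case by simp
next
  case (Suc n)
  have c1: "continuous_on (Kseq \<mu> n) (\<lambda>z. \<mu> * z - 1)" by (intro continuous_intros)
  have c2: "continuous_on (Kseq \<mu> n) (\<lambda>z. \<mu> * z + 1)" by (intro continuous_intros)
  show ?case using compact_continuous_image[OF c1 Suc] compact_continuous_image[OF c2 Suc] by (simp add: compact_Un)
qed

lemma Kseq_attr:
  assumes mu: "norm \<mu> < 1" shows "attractor \<mu> \<subseteq> Kseq \<mu> n"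
proof (induction n)
  case 0 then show ?case using attr_bound[OF mu] by auto
next
  case (Suc n)
  show ?case
  proof
    fix \<alpha> assume "\<alpha> \<in> attractor \<mu>"
    then obtain s \<alpha>' where s: "s \<in> ({-1,1}::int set)" and al': "\<alpha>' \<in> attractor \<mu>" and eq: "\<alpha> = of_int s + \<mu> * \<alpha>'"
      using attr_split[OF mu] by blast
    have "\<alpha>' \<in> Kseq \<mu> n" using al' Suc by blast
    then show "\<alpha> \<in> Kseq \<mu> (Suc n)" using s eq by (auto simp: add.commute)
  qed
qed

lemma Kseq_dec:
  assumes mu: "norm \<mu> < 1" shows "Kseq \<mu> (Suc n) \<subseteq> Kseq \<mu> n"
proof (induction n)
  case 0
  define R where "R = 1 / (1 - norm \<mu>)"
  have R: "norm \<mu> * R + 1 = R" using mu by (simp add: R_def field_simps)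
  have "norm (\<mu> * z + s) \<le> R" if "norm z \<le> R" "norm s = 1" for z s :: complex
  proof -
    have "norm (\<mu> * z + s) \<le> norm \<mu> * norm z + 1" using norm_triangle_ineq[of "\<mu> * z" s] that by (simp add: norm_mult)
    also have "\<dots> \<le> norm \<mu> * R + 1" using that by (simp add: mult_left_mono)
    finally show ?thesis using R by simp
  qed
  from this[of _ 1] this[of _ "-1"] show ?case by (auto simp: R_def)
next
  case (Suc n)
  then show ?case by auto
qed

lemma Kseq_mono:
  assumes mu: "norm \<mu> < 1" and "m \<le> n" shows "Kseq \<mu> n \<subseteq> Kseq \<mu> m"
proof -
  have "decseq (Kseq \<mu>)" by (rule decseq_SucI) (use Kseq_dec[OF mu] in auto)
  then show ?thesis using assms(2) by (simp add: decseqD)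
qed

lemma attr_eq_Inter:
  assumes mu: "norm \<mu> < 1" shows "attractor \<mu> = \<Inter> (range (Kseq \<mu>))"
proof
  show "attractor \<mu> \<subseteq> \<Inter> (range (Kseq \<mu>))" using Kseq_attr[OF mu] by blast
next
  define L where "L = \<Inter> (range (Kseq \<mu>))"
  define R where "R = 1 / (1 - norm \<mu>)"
  have bnd: "\<forall>z\<in>L. norm z \<le> R"
  proof
    fix z assume "z \<in> L" then have "z \<in> Kseq \<mu> 0" unfolding L_def by blast
    then show "norm z \<le> R" by (simp add: R_def)
  qed
  have AL: "attractor \<mu> \<subseteq> L" unfolding L_def using Kseq_attr[OF mu] by blast
  have step: "\<forall>z\<in>L. \<exists>d\<in>({-1,1}::int set). \<exists>z'\<in>L. z = of_int d + \<mu> * z'"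
  proof
    fix z assume zL: "z \<in> L"
    define Q where "Q s = {n. \<exists>z'\<in>Kseq \<mu> n. z = of_int s + \<mu> * z'}" for s :: int
    have "Q (-1) \<union> Q 1 = UNIV"
    proof -
      have "n \<in> Q (-1) \<union> Q 1" for n
      proof -
        have "z \<in> Kseq \<mu> (Suc n)" using zL unfolding L_def by blast
        then show ?thesis unfolding Q_def by (auto simp: add.commute)
      qed
      then show ?thesis by blast
    qed
    then have "infinite (Q (-1)) \<or> infinite (Q 1)" using infinite_UNIV_nat by (metis finite_Un)
    then obtain s where s: "s \<in> ({-1,1}::int set)" and inf: "infinite (Q s)" by blast
    have ex: "\<exists>n\<ge>m. n \<in> Q s" for m using inf by (simp add: infinite_nat_iff_unbounded_le)
    show "\<exists>d\<in>({-1,1}::int set). \<exists>z'\<in>L. z = of_int d + \<mu> * z'"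
    proof (cases "\<mu> = 0")
      case True
      obtain n where "n \<in> Q s" using ex by blast
      then have zs: "z = of_int s" unfolding Q_def using True by auto
      obtain \<alpha> where "\<alpha> \<in> attractor \<mu>" using attr_nonempty[OF mu] by blast
      then have "\<alpha> \<in> L" using AL by blast
      moreover have "z = of_int s + \<mu> * \<alpha>" using zs True by simp
      ultimately show ?thesis using s by blast
    next
      case False
      define z' where "z' = (z - of_int s) / \<mu>"
      have "z' \<in> Kseq \<mu> m" for m
      proof -
        obtain n where n: "n \<ge> m" "n \<in> Q s" using ex by blast
        then obtain z'' where z'': "z'' \<in> Kseq \<mu> n" "z = of_int s + \<mu> * z''" unfolding Q_def by blast
        have "z'' = z'" using z''(2) False by (simp add: z'_def)
        then show ?thesis using z''(1) Kseq_mono[OF mu n(1)] by blast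
      qed
      then have "z' \<in> L" unfolding L_def by blast
      moreover have "z = of_int s + \<mu> * z'" using False by (simp add: z'_def)
      ultimately show ?thesis using s by blast
    qed
  qed
  show "L \<subseteq> attractor \<mu>"
  proof
    fix z assume "z \<in> L"
    from expand_lemma[OF mu bnd step this] obtain e where "\<forall>n. e n \<in> ({-1,1}::int set)"
      "(\<lambda>n. of_int (e n) * \<mu>^n) sums z" by blast
    then show "z \<in> attractor \<mu>" unfolding attr_mem[OF mu] by blast
  qed
qed

lemma attr_compact:
  assumes mu: "norm \<mu> < 1" shows "compact (attractor \<mu>)"
proof -
  have "compact (\<Inter> (range (Kseq \<mu>)))" by (rule compact_Inter) (auto intro: Kseq_compact)
  then show ?thesis using attr_eq_Inter[OF mu] by simp
qed

lemma pieces_meet_iff: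
  assumes mu: "norm \<mu> < 1"
  shows "((\<lambda>z. \<mu> * z - 1) ` attractor \<mu> \<inter> (\<lambda>z. \<mu> * z + 1) ` attractor \<mu> \<noteq> {}) \<longleftrightarrow>
         (\<exists>c. (\<forall>n. c n \<in> ({-1,0,1}::int set)) \<and> (\<lambda>n. of_int (c n) * \<mu>^(Suc n)) sums 1)"
proof
  assume "(\<lambda>z. \<mu> * z - 1) ` attractor \<mu> \<inter> (\<lambda>z. \<mu> * z + 1) ` attractor \<mu> \<noteq> {}"
  then obtain \<alpha> \<beta> where al: "\<alpha> \<in> attractor \<mu>" and be: "\<beta> \<in> attractor \<mu>" and eq: "\<mu> * \<alpha> - 1 = \<mu> * \<beta> + 1"
    by auto
  obtain a where a: "\<forall>n. a n \<in> ({-1,1}::int set)" and sa: "(\<lambda>n. complex_of_int (a n) * \<mu>^n) sums \<alpha>"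
    using al attr_mem[OF mu] by blast
  obtain b where b: "\<forall>n. b n \<in> ({-1,1}::int set)" and sb: "(\<lambda>n. complex_of_int (b n) * \<mu>^n) sums \<beta>"
    using be attr_mem[OF mu] by blast
  define c where "c n = (a n - b n) div 2" for n
  have cn: "c n \<in> ({-1,0,1}::int set) \<and> complex_of_int (c n) = (complex_of_int (a n) - complex_of_int (b n)) / 2" for n
    using a[rule_format, of n] b[rule_format, of n] by (auto simp: c_def)
  have "(\<lambda>n. (1/2) * (\<mu> * (complex_of_int (a n) * \<mu>^n - complex_of_int (b n) * \<mu>^n))) sums ((1/2) * (\<mu> * (\<alpha> - \<beta>)))"
    by (intro sums_mult sums_diff sa sb)
  moreover have "(1/2) * (\<mu> * (\<alpha> - \<beta>)) = 1" using eq by (simp add: algebra_simps)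
  moreover have "(\<lambda>n. (1/2) * (\<mu> * (complex_of_int (a n) * \<mu>^n - complex_of_int (b n) * \<mu>^n))) =
                 (\<lambda>n. of_int (c n) * \<mu>^(Suc n))"
  proof
    fix n
    have "(1/2) * (\<mu> * (complex_of_int (a n) * \<mu>^n - complex_of_int (b n) * \<mu>^n)) = \<mu> * \<mu>^n * ((complex_of_int (a n) - complex_of_int (b n)) / 2)"
      by (simp add: algebra_simps)
    also have "\<dots> = of_int (c n) * \<mu>^(Suc n)" using cn[of n] by simp
    finally show "(1/2) * (\<mu> * (complex_of_int (a n) * \<mu>^n - complex_of_int (b n) * \<mu>^n)) = of_int (c n) * \<mu>^(Suc n)" .
  qed
  ultimately have "(\<lambda>n. of_int (c n) * \<mu>^(Suc n)) sums 1" by simp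
  then show "\<exists>c. (\<forall>n. c n \<in> ({-1,0,1}::int set)) \<and> (\<lambda>n. of_int (c n) * \<mu>^(Suc n)) sums 1"
    using cn by blast
next
  assume "\<exists>c. (\<forall>n. c n \<in> ({-1,0,1}::int set)) \<and> (\<lambda>n. of_int (c n) * \<mu>^(Suc n)) sums 1"
  then obtain c where c: "\<forall>n. c n \<in> ({-1,0,1}::int set)" and sc: "(\<lambda>n. of_int (c n) * \<mu>^(Suc n)) sums 1"
    by blast
  define a where "a n = (if c n = -1 then -1 else 1 :: int)" for n
  define b where "b n = (if c n = 1 then -1 else 1 :: int)" for n
  have ab: "a n \<in> ({-1,1}::int set) \<and> b n \<in> ({-1,1}::int set) \<and> complex_of_int (a n) - complex_of_int (b n) = 2 * of_int (c n)" for n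
    using c[rule_format, of n] by (auto simp: a_def b_def)
  have "\<bar>a n\<bar> \<le> 1" for n by (simp add: a_def)
  then have "summable (\<lambda>n. complex_of_int (a n) * \<mu>^n)" by (rule digit_summable(1)[OF mu])
  then have sa: "(\<lambda>n. complex_of_int (a n) * \<mu>^n) sums (\<Sum>n. complex_of_int (a n) * \<mu>^n)" by (rule summable_sums)
  have "\<bar>b n\<bar> \<le> 1" for n by (simp add: b_def)
  then have "summable (\<lambda>n. complex_of_int (b n) * \<mu>^n)" by (rule digit_summable(1)[OF mu])
  then have sb: "(\<lambda>n. complex_of_int (b n) * \<mu>^n) sums (\<Sum>n. complex_of_int (b n) * \<mu>^n)" by (rule summable_sums)
  define \<alpha> where "\<alpha> = (\<Sum>n. complex_of_int (a n) * \<mu>^n)"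
  define \<beta> where "\<beta> = (\<Sum>n. complex_of_int (b n) * \<mu>^n)"
  have al: "\<alpha> \<in> attractor \<mu>" unfolding attr_mem[OF mu] using ab sa \<alpha>_def by blast
  have be: "\<beta> \<in> attractor \<mu>" unfolding attr_mem[OF mu] using ab sb \<beta>_def by blast
  have "(\<lambda>n. \<mu> * (complex_of_int (a n) * \<mu>^n - complex_of_int (b n) * \<mu>^n)) sums (\<mu> * (\<alpha> - \<beta>))"
    unfolding \<alpha>_def \<beta>_def by (intro sums_mult sums_diff sa sb)
  moreover have "(\<lambda>n. \<mu> * (complex_of_int (a n) * \<mu>^n - complex_of_int (b n) * \<mu>^n)) = (\<lambda>n. 2 * (of_int (c n) * \<mu>^(Suc n)))"
  proof
    fix n
    have "\<mu> * (complex_of_int (a n) * \<mu>^n - complex_of_int (b n) * \<mu>^n) = \<mu> * \<mu>^n * (complex_of_int (a n) - complex_of_int (b n))"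
      by (simp add: algebra_simps)
    also have "\<dots> = 2 * (of_int (c n) * \<mu>^(Suc n))" using ab[of n] by simp
    finally show "\<mu> * (complex_of_int (a n) * \<mu>^n - complex_of_int (b n) * \<mu>^n) = 2 * (of_int (c n) * \<mu>^(Suc n))" .
  qed
  ultimately have "(\<lambda>n. 2 * (of_int (c n) * \<mu>^(Suc n))) sums (\<mu> * (\<alpha> - \<beta>))" by simp
  moreover have "(\<lambda>n. 2 * (of_int (c n) * \<mu>^(Suc n))) sums (2 * 1)" by (intro sums_mult sc)
  ultimately have "\<mu> * (\<alpha> - \<beta>) = 2" using sums_unique2 by force
  then have "\<mu> * \<alpha> - 1 = \<mu> * \<beta> + 1" by (simp add: algebra_simps)
  then show "(\<lambda>z. \<mu> * z - 1) ` attractor \<mu> \<inter> (\<lambda>z. \<mu> * z + 1) ` attractor \<mu> \<noteq> {}"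
    using al be by blast
qed

lemma attr_pieces:
  assumes mu: "norm \<mu> < 1"
  shows "attractor \<mu> = (\<lambda>z. \<mu> * z - 1) ` attractor \<mu> \<union> (\<lambda>z. \<mu> * z + 1) ` attractor \<mu>"
proof
  show "attractor \<mu> \<subseteq> (\<lambda>z. \<mu> * z - 1) ` attractor \<mu> \<union> (\<lambda>z. \<mu> * z + 1) ` attractor \<mu>"
  proof
    fix \<alpha> assume "\<alpha> \<in> attractor \<mu>"
    then obtain s \<alpha>' where s: "s \<in> ({-1,1}::int set)" and al': "\<alpha>' \<in> attractor \<mu>" and eq: "\<alpha> = of_int s + \<mu> * \<alpha>'"
      using attr_split[OF mu] by blast
    then show "\<alpha> \<in> (\<lambda>z. \<mu> * z - 1) ` attractor \<mu> \<union> (\<lambda>z. \<mu> * z + 1) ` attractor \<mu>"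
      by (auto simp: add.commute)
  qed
next
  have "\<mu> * z - 1 \<in> attractor \<mu>" "\<mu> * z + 1 \<in> attractor \<mu>" if "z \<in> attractor \<mu>" for z
    using attr_shift[OF mu that, of "-1"] attr_shift[OF mu that, of 1] by (auto simp: add.commute)
  then show "(\<lambda>z. \<mu> * z - 1) ` attractor \<mu> \<union> (\<lambda>z. \<mu> * z + 1) ` attractor \<mu> \<subseteq> attractor \<mu>" by blast
qed

lemma conn_iff:
  assumes mu: "norm \<mu> < 1"
  shows "connected (attractor \<mu>) \<longleftrightarrow> (\<exists>c. (\<forall>n. c n \<in> ({-1,0,1}::int set)) \<and> (\<lambda>n. of_int (c n) * \<mu>^(Suc n)) sums 1)"
proof -
  define A where "A = attractor \<mu>"
  define P1 where "P1 = (\<lambda>z. \<mu> * z - 1) ` A"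
  define P2 where "P2 = (\<lambda>z. \<mu> * z + 1) ` A"
  have AP: "A = P1 \<union> P2" unfolding A_def P1_def P2_def by (rule attr_pieces[OF mu])
  have cA: "compact A" unfolding A_def by (rule attr_compact[OF mu])
  have c1: "compact P1" unfolding P1_def by (rule compact_continuous_image[OF _ cA]) (intro continuous_intros)
  have c2: "compact P2" unfolding P2_def by (rule compact_continuous_image[OF _ cA]) (intro continuous_intros)
  have ne: "A \<noteq> {}" unfolding A_def by (rule attr_nonempty[OF mu])
  have "connected A \<longleftrightarrow> P1 \<inter> P2 \<noteq> {}"
  proof
    assume cA': "connected A"
    show "P1 \<inter> P2 \<noteq> {}"
    proof
      assume dis: "P1 \<inter> P2 = {}"
      have "P1 \<noteq> {}" "P2 \<noteq> {}" using ne unfolding P1_def P2_def by auto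
      then have "\<exists>X Y. closed X \<and> closed Y \<and> A \<subseteq> X \<union> Y \<and> X \<inter> Y \<inter> A = {} \<and> X \<inter> A \<noteq> {} \<and> Y \<inter> A \<noteq> {}"
        using c1 c2 dis AP by (intro exI[of _ P1] exI[of _ P2]) (auto simp: compact_imp_closed)
      then show False using cA' unfolding connected_closed by blast
    qed
  next
    assume meet: "P1 \<inter> P2 \<noteq> {}"
    have conn: "connected (Kseq \<mu> n)" for n
    proof (induction n)
      case 0 then show ?case by simp
    next
      case (Suc n)
      have cc1: "connected ((\<lambda>z. \<mu> * z - 1) ` Kseq \<mu> n)"
        by (rule connected_continuous_image[OF _ Suc]) (intro continuous_intros)
      have cc2: "connected ((\<lambda>z. \<mu> * z + 1) ` Kseq \<mu> n)"
        by (rule connected_continuous_image[OF _ Suc]) (intro continuous_intros)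
      have sub: "A \<subseteq> Kseq \<mu> n" unfolding A_def by (rule Kseq_attr[OF mu])
      have "P1 \<subseteq> (\<lambda>z. \<mu> * z - 1) ` Kseq \<mu> n" "P2 \<subseteq> (\<lambda>z. \<mu> * z + 1) ` Kseq \<mu> n"
        unfolding P1_def P2_def using sub by auto
      then have "(\<lambda>z. \<mu> * z - 1) ` Kseq \<mu> n \<inter> (\<lambda>z. \<mu> * z + 1) ` Kseq \<mu> n \<noteq> {}" using meet by blast
      then show ?case using cc1 cc2 by (simp add: connected_Un)
    qed
    have "connected (\<Inter> (range (Kseq \<mu>)))"
    proof (rule connected_nest)
      show "\<And>n. compact (Kseq \<mu> n)" by (rule Kseq_compact)
      show "\<And>n. connected (Kseq \<mu> n)" by (rule conn)
      show "\<And>m n. m \<le> n \<Longrightarrow> Kseq \<mu> n \<subseteq> Kseq \<mu> m" by (rule Kseq_mono[OF mu])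
    qed
    then show "connected A" unfolding A_def using attr_eq_Inter[OF mu] by simp
  qed
  then show ?thesis unfolding A_def P1_def P2_def using pieces_meet_iff[OF mu] by simp
qed

lemma H_props:
  assumes "\<mu> \<in> regionH"
  shows "norm \<mu> < 1" "Re \<mu> \<ge> 0" "Im \<mu> \<ge> 1/2" "1 + 2 * Re \<mu> \<le> 3 * (Re \<mu>^2 + Im \<mu>^2)"
    "Re \<mu>^2 + Im \<mu>^2 \<le> 1/2" "norm \<mu> \<le> 3/4"
proof -
  have b: "norm \<mu> < 1 / sqrt 2" and x: "Re \<mu> > 0" and y: "Im \<mu> > 0" and nb: "norm (\<mu> - 1/3) \<ge> 2/3"
    using assms unfolding regionH_def by (auto simp: dist_norm norm_minus_commute)
  have n2: "norm \<mu> ^ 2 = Re \<mu>^2 + Im \<mu>^2" by (rule cmod_power2)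
  have "norm \<mu> ^ 2 < (1 / sqrt 2) ^ 2" using b by (intro power_strict_mono) auto
  then have r: "Re \<mu>^2 + Im \<mu>^2 < 1/2" using n2 by (simp add: power_divide)
  have "(2/3)^2 \<le> norm (\<mu> - 1/3) ^ 2" using nb by (intro power_mono) auto
  also have "norm (\<mu> - 1/3) ^ 2 = (Re \<mu> - 1/3)^2 + Im \<mu>^2" by (simp add: cmod_power2)
  finally have c: "(2/3)^2 \<le> (Re \<mu> - 1/3)^2 + Im \<mu>^2" .
  show c': "1 + 2 * Re \<mu> \<le> 3 * (Re \<mu>^2 + Im \<mu>^2)" using c by (simp add: power2_eq_square algebra_simps)
  show "Re \<mu>^2 + Im \<mu>^2 \<le> 1/2" using r by simp
  show "Re \<mu> \<ge> 0" using x by simp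
  have "3 * (Re \<mu>^2 + Im \<mu>^2) < 3/2" using r by simp
  then have x4: "Re \<mu> < 1/4" using c' by linarith
  have "Re \<mu> * Re \<mu> \<le> Re \<mu> * (2/3)" using x x4 by (intro mult_left_mono) auto
  then have "Im \<mu>^2 \<ge> 1/4" using c' by (simp add: power2_eq_square algebra_simps)
  then have "(1/2)^2 \<le> Im \<mu>^2" by (simp add: power2_eq_square)
  then show "Im \<mu> \<ge> 1/2" using power2_le_imp_le[of "1/2" "Im \<mu>"] y by simp
  have "(3/4::real)^2 = 9/16" by (simp add: power2_eq_square)
  then have "norm \<mu> ^ 2 \<le> (3/4)^2" using n2 r by linarith
  then show "norm \<mu> \<le> 3/4" by (rule power2_le_imp_le) simp
  then show "norm \<mu> < 1" by simp
qed

lemma tail_split: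
  fixes z :: complex and c :: "nat \<Rightarrow> int"
  assumes z: "norm z < 1" and c: "\<And>n. \<bar>c n\<bar> \<le> 1"
  shows "(\<lambda>n. of_int (c n) * z^(Suc n)) sums ((\<Sum>n<N. of_int (c n) * z^(Suc n)) + z^(Suc N) * (\<Sum>i. of_int (c (i+N)) * z^i))"
    and "norm (\<Sum>i. of_int (c (i+N)) * z^i) \<le> 1 / (1 - norm z)"
proof -
  have cs: "\<bar>c (i+N)\<bar> \<le> 1" for i by (rule c)
  have "summable (\<lambda>i. of_int (c (i+N)) * z^i)" using digit_summable(1)[OF z, of "\<lambda>i. c (i+N)"] cs by blast
  then have "(\<lambda>i. of_int (c (i+N)) * z^i) sums (\<Sum>i. of_int (c (i+N)) * z^i)" by (rule summable_sums)
  then have "(\<lambda>i. z^(Suc N) * (of_int (c (i+N)) * z^i)) sums (z^(Suc N) * (\<Sum>i. of_int (c (i+N)) * z^i))"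
    by (rule sums_mult)
  moreover have "(\<lambda>i. z^(Suc N) * (of_int (c (i+N)) * z^i)) = (\<lambda>i. of_int (c (i+N)) * z^(Suc (i+N)))"
    by (auto simp: power_add mult_ac)
  ultimately have "(\<lambda>i. of_int (c (i+N)) * z^(Suc (i+N))) sums (z^(Suc N) * (\<Sum>i. of_int (c (i+N)) * z^i))" by simp
  then have "(\<lambda>n. of_int (c n) * z^(Suc n)) sums (z^(Suc N) * (\<Sum>i. of_int (c (i+N)) * z^i) + (\<Sum>n<N. of_int (c n) * z^(Suc n)))"
    using sums_iff_shift[of "\<lambda>n. of_int (c n) * z^(Suc n)" N] by simp
  then show "(\<lambda>n. of_int (c n) * z^(Suc n)) sums ((\<Sum>n<N. of_int (c n) * z^(Suc n)) + z^(Suc N) * (\<Sum>i. of_int (c (i+N)) * z^i))"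
    by (simp add: add.commute)
  show "norm (\<Sum>i. of_int (c (i+N)) * z^i) \<le> 1 / (1 - norm z)"
    using digit_summable(2)[OF z, of "\<lambda>i. c (i+N)"] cs by blast
qed

lemma in_M_from_poly:
  fixes \<mu> :: complex and c :: "nat \<Rightarrow> int"
  assumes H: "\<mu> \<in> regionH" and c: "\<forall>n. c n \<in> ({-1,0,1}::int set)"
    and small: "norm (1 - (\<Sum>n<N. of_int (c n) * \<mu>^(Suc n))) < norm \<mu> ^ (Suc N) / 4"
  shows "\<mu> \<in> connLocus"
proof -
  note hp = H_props[OF H]
  have mu0: "\<mu> \<noteq> 0" using hp(3) by auto
  define P where "P = 1 - (\<Sum>n<N. of_int (c n) * \<mu>^(Suc n))"
  define w where "w = P / \<mu>^(Suc N)"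
  have npos: "norm \<mu> ^ Suc N > 0" using mu0 by simp
  have "norm w = norm P / norm \<mu> ^ Suc N" by (simp add: w_def norm_divide norm_power norm_mult del: power_Suc)
  also have "\<dots> < 1/4" using small npos by (simp add: P_def divide_less_eq mult.commute)
  finally have w: "norm w < 1/4" .
  obtain e where e: "\<forall>n. e n \<in> ({-1,0,1}::int set)" and se: "(\<lambda>n. of_int (e n) * \<mu>^n) sums w"
    using trap_ball[OF hp(1) hp(2) hp(3) hp(4) hp(5) w] by blast
  define c' where "c' n = (if n < N then c n else e (n - N))" for n
  define f where "f n = of_int (c' n) * \<mu>^(Suc n)" for n
  have "(\<lambda>i. \<mu>^(Suc N) * (of_int (e i) * \<mu>^i)) sums (\<mu>^(Suc N) * w)" by (rule sums_mult[OF se])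
  moreover have "(\<lambda>i. \<mu>^(Suc N) * (of_int (e i) * \<mu>^i)) = (\<lambda>i. f (i + N))"
    by (auto simp: f_def c'_def power_add mult_ac)
  moreover have "\<mu>^(Suc N) * w = P" using mu0 by (simp add: w_def)
  ultimately have "(\<lambda>i. f (i + N)) sums P" by simp
  then have "f sums (P + (\<Sum>i<N. f i))" by (simp add: sums_iff_shift)
  moreover have "(\<Sum>i<N. f i) = (\<Sum>n<N. of_int (c n) * \<mu>^(Suc n))"
    by (rule sum.cong) (auto simp: f_def c'_def)
  ultimately have "f sums 1" by (simp add: P_def)
  moreover have "\<forall>n. c' n \<in> ({-1,0,1}::int set)" using c e by (simp add: c'_def)
  ultimately have "connected (attractor \<mu>)" unfolding conn_iff[OF hp(1)] f_def by blast
  then show ?thesis unfolding connLocus_def using hp(1) by blast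
qed

theorem mainTheorem1:
  shows "connLocus \<inter> interior regionH \<subseteq> closure (interior connLocus)"
proof
  fix l assume l: "l \<in> connLocus \<inter> interior regionH"
  then have lH: "l \<in> interior regionH" and lM: "l \<in> connLocus" by auto
  have nl: "norm l < 1" using lM unfolding connLocus_def by blast
  have "connected (attractor l)" using lM unfolding connLocus_def by blast
  then obtain c where c: "\<forall>n. c n \<in> ({-1,0,1}::int set)" and sc: "(\<lambda>n. of_int (c n) * l^(Suc n)) sums 1"
    unfolding conn_iff[OF nl] by blast
  have cb: "\<bar>c n\<bar> \<le> 1" for n using c[rule_format, of n] by auto
  define G where "G z = (\<Sum>n. of_int (c n) * z^n)" for z :: complex
  define f where "f z = 1 - z * G z" for z
  have Gs: "(\<lambda>n. of_int (c n) * z^n) sums G z" if "norm z < 1" for z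
    unfolding G_def by (rule summable_sums) (rule digit_summable(1)[OF that cb])
  have zGs: "(\<lambda>n. of_int (c n) * z^(Suc n)) sums (z * G z)" if "norm z < 1" for z
  proof -
    have "(\<lambda>n. z * (of_int (c n) * z^n)) sums (z * G z)" by (rule sums_mult[OF Gs[OF that]])
    then show ?thesis by (simp add: mult_ac)
  qed
  define a where "a n = (if n = 0 then 1 else - of_int (c (n - 1)) :: complex)" for n
  have fs: "(\<lambda>n. a n * (z - 0)^n) sums f z" if "z \<in> ball 0 1" for z
  proof -
    have nz: "norm z < 1" using that by simp
    have "(\<lambda>n. - (of_int (c n) * z^(Suc n))) sums (- (z * G z))" by (rule sums_minus[OF zGs[OF nz]])
    then have "(\<lambda>n. a (Suc n) * z^(Suc n)) sums (- (z * G z))" by (simp add: a_def)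
    then have "(\<lambda>n. a n * z^n) sums (- (z * G z) + a 0 * z^0)" by (rule sums_Suc_iff[THEN iffD1])
    then show ?thesis by (simp add: a_def f_def)
  qed
  have holf: "f holomorphic_on ball 0 1" by (rule power_series_holomorphic[OF fs])
  have fl: "f l = 0"
  proof -
    have "l * G l = 1" using sums_unique2[OF zGs[OF nl] sc] .
    then show ?thesis by (simp add: f_def)
  qed
  have f0: "f 0 \<noteq> 0" by (simp add: f_def)
  have lb: "l \<in> ball 0 1" using nl by simp
  obtain r where r: "r > 0" "ball l r \<subseteq> ball 0 1" and fnz: "\<And>z. z \<in> ball l r - {l} \<Longrightarrow> f z \<noteq> 0"
    using isolated_zeros[OF holf open_ball connected_ball lb fl _ f0] by auto
  obtain r0 where r0: "r0 > 0" "cball l r0 \<subseteq> interior regionH"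
    using lH open_interior[of regionH] unfolding open_contains_cball by blast
  show "l \<in> closure (interior connLocus)"
    unfolding closure_approachable
  proof (intro allI impI)
    fix \<epsilon> :: real assume ep: "\<epsilon> > 0"
    define \<rho> where "\<rho> = min (min r0 (r/2)) (\<epsilon>/2)"
    have rho: "\<rho> > 0" "\<rho> \<le> r0" "\<rho> < r" "\<rho> < \<epsilon>" using r r0 ep by (auto simp: \<rho>_def)
    have cint: "cball l \<rho> \<subseteq> interior regionH" using subset_cball[OF rho(2), of l] r0(2) by (rule order_trans)
    have cH: "cball l \<rho> \<subseteq> regionH" using cint interior_subset[of regionH] by (rule order_trans)
    have c34: "norm z \<le> 3/4" if "z \<in> cball l \<rho>" for z using H_props(6) cH that by blast
    have cball_sub: "cball l \<rho> \<subseteq> ball l r" using rho(3) by auto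
    have contf: "continuous_on (cball l \<rho>) f"
      using holomorphic_on_imp_continuous_on[OF holf] cball_sub r(2) continuous_on_subset by blast
    have sph_nz: "f z \<noteq> 0" if "z \<in> sphere l \<rho>" for z
      using fnz[of z] that rho by (auto simp: dist_commute)
    have "sphere l \<rho> \<noteq> {}" using rho(1) by simp
    moreover have "continuous_on (sphere l \<rho>) (\<lambda>z. norm (f z))"
      by (rule continuous_on_norm, rule continuous_on_subset[OF contf]) auto
    ultimately obtain z0 where z0: "z0 \<in> sphere l \<rho>" "\<And>y. y \<in> sphere l \<rho> \<Longrightarrow> norm (f z0) \<le> norm (f y)"
      using continuous_attains_inf[OF compact_sphere, of l \<rho> "\<lambda>z. norm (f z)"] by blast
    define \<delta> where "\<delta> = norm (f z0)"
    have dpos: "\<delta> > 0" using sph_nz[OF z0(1)] by (simp add: \<delta>_def)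
    have dle: "\<delta> \<le> norm (f y)" if "y \<in> sphere l \<rho>" for y using z0(2)[OF that] by (simp add: \<delta>_def)
    obtain N where N: "(3/4::real)^N < \<delta>/8" using real_arch_pow_inv[of "\<delta>/8" "3/4"] dpos by auto
    define p where "p z = 1 - (\<Sum>n<N. of_int (c n) * z^(Suc n))" for z :: complex
    have perr: "norm (p z - f z) < \<delta>/2" if zc: "z \<in> cball l \<rho>" for z
    proof -
      have z34: "norm z \<le> 3/4" by (rule c34[OF zc])
      then have nz: "norm z < 1" by simp
      define T where "T = (\<Sum>i. of_int (c (i+N)) * z^i)"
      have "z * G z = (\<Sum>n<N. of_int (c n) * z^(Suc n)) + z^(Suc N) * T"
        using sums_unique2[OF zGs[OF nz] tail_split(1)[OF nz cb, where N=N]] by (simp add: T_def)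
      then have eq: "p z - f z = z^(Suc N) * T" by (simp add: p_def f_def)
      have Tb: "norm T \<le> 1 / (1 - norm z)" using tail_split(2)[OF nz cb, where N=N] by (simp add: T_def)
      have "1 / (1 - norm z) \<le> 4" using z34 by (simp add: field_simps)
      then have Tb4: "norm T \<le> 4" using Tb by linarith
      have "norm z ^ Suc N \<le> (3/4)^Suc N" using z34 by (intro power_mono) auto
      also have "(3/4::real)^Suc N \<le> (3/4)^N" by simp
      finally have zN: "norm z ^ Suc N < \<delta>/8" using N by linarith
      have "norm (p z - f z) = norm z ^ Suc N * norm T" by (simp add: eq norm_mult norm_power del: power_Suc)
      also have "\<dots> \<le> norm z ^ Suc N * 4" using Tb4 by (intro mult_left_mono) auto
      also have "\<dots> < \<delta>/8 * 4" using zN by (intro mult_strict_right_mono) auto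
      finally show ?thesis by simp
    qed
    have "\<exists>\<mu>0\<in>cball l \<rho>. p \<mu>0 = 0"
    proof (rule ccontr)
      assume "\<not> (\<exists>\<mu>0\<in>cball l \<rho>. p \<mu>0 = 0)"
      then have pnz: "p z \<noteq> 0" if "z \<in> cball l \<rho>" for z using that by blast
      define h where "h z = inverse (p z)" for z
      have holh: "h holomorphic_on interior (cball l \<rho>)"
        unfolding h_def p_def interior_cball
        by (intro holomorphic_intros) (use pnz[unfolded p_def] in auto)
      have conth: "continuous_on (closure (cball l \<rho>)) h"
        unfolding h_def p_def closure_closed[OF closed_cball]
        by (intro continuous_intros) (use pnz[unfolded p_def] in auto)
      have hb: "norm (h z) \<le> 2/\<delta>" if "z \<in> frontier (cball l \<rho>)" for z
      proof -
        have zs: "z \<in> sphere l \<rho>" using that by simp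
        then have zc: "z \<in> cball l \<rho>" by auto
        have "norm (f z) \<le> norm (p z) + norm (p z - f z)" using norm_triangle_ineq4[of "p z" "p z - f z"] by simp
        then have "\<delta>/2 \<le> norm (p z)" using dle[OF zs] perr[OF zc] by linarith
        then have pp: "norm (p z) > 0" using dpos by linarith
        have "1 / norm (p z) \<le> 1 / (\<delta>/2)" using \<open>\<delta>/2 \<le> norm (p z)\<close> dpos pp by (intro divide_left_mono) auto
        moreover have "norm (h z) = 1 / norm (p z)" by (simp add: h_def norm_inverse divide_inverse)
        moreover have "1 / (\<delta>/2) = 2/\<delta>" by simp
        ultimately show ?thesis by metis
      qed
      have lc: "l \<in> cball l \<rho>" using rho by simp
      have "norm (h l) \<le> 2/\<delta>"
        by (rule maximum_modulus_frontier[OF holh conth _ hb lc]) simp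
      moreover have "norm (h l) = 1 / norm (p l)" by (simp add: h_def norm_inverse divide_inverse)
      ultimately have A: "1 / norm (p l) \<le> 2/\<delta>" by simp
      have np: "norm (p l) < \<delta>/2" using perr[OF lc] fl by simp
      have ppos: "norm (p l) > 0" using pnz[OF lc] by simp
      have "1/(\<delta>/2) < 1 / norm (p l)" using np ppos dpos by (intro divide_strict_left_mono) (auto intro: mult_pos_pos)
      then have B: "2/\<delta> < 1 / norm (p l)" by simp
      show False using order.strict_trans2[OF B A] by simp
    qed
    then obtain \<mu>0 where mu0: "\<mu>0 \<in> cball l \<rho>" "p \<mu>0 = 0" by blast
    define U where "U = interior regionH \<inter> {z. norm (p z) < norm z ^ Suc N / 4}"
    have "open {z. norm (p z) < norm z ^ Suc N / 4}"
      unfolding p_def by (intro open_Collect_less continuous_intros) auto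
    then have oU: "open U" unfolding U_def by (intro open_Int open_interior)
    have UM: "U \<subseteq> connLocus"
    proof
      fix z assume "z \<in> U"
      then have zH: "z \<in> regionH" and sm: "norm (p z) < norm z ^ Suc N / 4"
        using interior_subset[of regionH] unfolding U_def by auto
      show "z \<in> connLocus" by (rule in_M_from_poly[OF zH c]) (use sm in \<open>simp add: p_def\<close>)
    qed
    have "\<mu>0 \<in> regionH" using cH mu0(1) by blast
    then have "\<mu>0 \<noteq> 0" using H_props(3)[of \<mu>0] by auto
    then have "\<mu>0 \<in> U" unfolding U_def using mu0 cint by auto
    then have "\<mu>0 \<in> interior connLocus" using interior_maximal[OF UM oU] by blast
    moreover have "dist \<mu>0 l < \<epsilon>" using mu0(1) rho(4) by (simp add: dist_commute)
    ultimately show "\<exists>y\<in>interior connLocus. dist y l < \<epsilon>" by blast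
  qed
qed

end
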